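(* Let $k$ be a commutative ring and $A$ a commutative $k$-algebra such that $\operatorname{Ider}_k(A)=\operatorname{Der}_k(A)$ and $\operatorname{Der}_k(A)$ is a free $A$-module of finite rank with basis $D^1_1,\dots,D^n_1$, where $D^1,\dots,D^n\in\operatorname{HS}_k(A)$. Then every $k$-linear differential operator $P:A\to A$ of order $\le d$ can be written uniquely as $$P=\sum_{\alpha\in\mathbb N^n,\ |\alpha|\le d}a_\alpha\,\mathbf D_\alpha,\qquad a_\alpha\in A,$$ where $\mathbf D_\alpha=D^1_{\alpha_1}\circ\cdots\circ D^n_{\alpha_n}$.
   Context: $\operatorname{HS}_k(A)$: infinite sequences $D=(D_0,D_1,\dots)$ of $k$-linear maps $A\to A$ with $D_0=\mathrm{Id}$ and $D_i(xy)=\sum_{r+s=i}D_r(x)D_s(y)$. $\operatorname{Ider}_k(A)=\{D_1:D\in\operatorname{HS}_k(A)\}$. $k$-linear differential operators of order $\le d$ are defined inductively: order $0$ = multiplications by elements of $A$; $\varphi\in\operatorname{End}_k(A)$ has order $\le i+1$ iff $\varphi\circ a-a\circ\varphi$ has order $\le i$ for all $a\in A$. *)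

theory Defs
  imports Main
begin

text \<open>A commutative k-algebra A is modelled by a type 'a :: comm_ring_1 together with
 a ring homomorphism phi : 'k \<Rightarrow> 'a (the structure map); the k-module structure on A
 is c \<cdot> x = phi c * x.\<close>

definition ring_hom_fn :: "('k::comm_ring_1 \<Rightarrow> 'a::comm_ring_1) \<Rightarrow> bool" where
  "ring_hom_fn phi \<longleftrightarrow> phi 1 = 1 \<and> (\<forall>a b. phi (a + b) = phi a + phi b)
     \<and> (\<forall>a b. phi (a * b) = phi a * phi b)"

definition klin :: "('k::comm_ring_1 \<Rightarrow> 'a::comm_ring_1) \<Rightarrow> ('a \<Rightarrow> 'a) \<Rightarrow> bool" where
  "klin phi f \<longleftrightarrow> (\<forall>x y. f (x + y) = f x + f y) \<and> (\<forall>c x. f (phi c * x) = phi c * f x)"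

text \<open>Hasse--Schmidt derivations (infinite length).\<close>
definition HS :: "('k::comm_ring_1 \<Rightarrow> 'a::comm_ring_1) \<Rightarrow> (nat \<Rightarrow> 'a \<Rightarrow> 'a) \<Rightarrow> bool" where
  "HS phi D \<longleftrightarrow> D 0 = id \<and> (\<forall>i. klin phi (D i))
     \<and> (\<forall>i x y. D i (x * y) = (\<Sum>r\<le>i. D r x * D (i - r) y))"

definition Ider :: "('k::comm_ring_1 \<Rightarrow> 'a::comm_ring_1) \<Rightarrow> ('a \<Rightarrow> 'a) set" where
  "Ider phi = {D 1 | D. HS phi D}"

definition Der :: "('k::comm_ring_1 \<Rightarrow> 'a::comm_ring_1) \<Rightarrow> ('a \<Rightarrow> 'a) set" where
  "Der phi = {f. klin phi f \<and> (\<forall>x y. f (x * y) = x * f y + f x * y)}"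

fun diffop :: "('k::comm_ring_1 \<Rightarrow> 'a::comm_ring_1) \<Rightarrow> nat \<Rightarrow> ('a \<Rightarrow> 'a) \<Rightarrow> bool" where
  "diffop phi 0 P \<longleftrightarrow> (\<exists>a. P = (\<lambda>x. a * x))"
| "diffop phi (Suc i) P \<longleftrightarrow> klin phi P \<and> (\<forall>a. diffop phi i (\<lambda>x. P (a * x) - a * P x))"

definition multi_idx :: "nat \<Rightarrow> nat \<Rightarrow> (nat \<Rightarrow> nat) set" where
  "multi_idx n d = {\<alpha>. (\<forall>j\<ge>n. \<alpha> j = 0) \<and> (\<Sum>j<n. \<alpha> j) \<le> d}"

fun Dcomp :: "(nat \<Rightarrow> nat \<Rightarrow> 'a \<Rightarrow> 'a) \<Rightarrow> nat \<Rightarrow> (nat \<Rightarrow> nat) \<Rightarrow> 'a \<Rightarrow> 'a" where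
  "Dcomp Dd 0 \<alpha> = id"
| "Dcomp Dd (Suc m) \<alpha> = Dcomp Dd m \<alpha> \<circ> Dd m (\<alpha> m)"

end

theory Submission
  imports Defs
begin


definition cm :: "('a::comm_ring_1 \<Rightarrow> 'a) \<Rightarrow> 'a \<Rightarrow> 'a \<Rightarrow> 'a" where
  "cm P a = (\<lambda>x. P (a * x) - a * P x)"

fun comm :: "('a::comm_ring_1 \<Rightarrow> 'a) \<Rightarrow> 'a list \<Rightarrow> 'a \<Rightarrow> 'a" where
  "comm P [] = P"
| "comm P (a # as) = comm (cm P a) as"

definition sy :: "('a::comm_ring_1 \<Rightarrow> 'a) \<Rightarrow> 'a list \<Rightarrow> 'a" where
  "sy P as = comm P as 1"

definition vanish :: "nat \<Rightarrow> ('a::comm_ring_1 \<Rightarrow> 'a) \<Rightarrow> bool" where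
  "vanish k R \<longleftrightarrow> (\<forall>as. k \<le> length as \<longrightarrow> comm R as = (\<lambda>x. 0))"

lemma comm_append: "comm P (as @ bs) = comm (comm P as) bs"
  by (induction as arbitrary: P) auto

lemma cm_zero[simp]: "cm (\<lambda>x. 0) a = (\<lambda>x. 0)" by (simp add: cm_def)
lemma comm_zero[simp]: "comm (\<lambda>x. 0) as = (\<lambda>x. 0)" by (induction as) auto

lemma cm_add: "cm (\<lambda>x. F x + G x) a = (\<lambda>x. cm F a x + cm G a x)"
  by (simp add: cm_def fun_eq_iff algebra_simps)
lemma comm_add: "comm (\<lambda>x. F x + G x) as = (\<lambda>x. comm F as x + comm G as x)"
  by (induction as arbitrary: F G) (auto simp: cm_add)
lemma cm_diff: "cm (\<lambda>x. F x - G x) a = (\<lambda>x. cm F a x - cm G a x)"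
  by (simp add: cm_def fun_eq_iff algebra_simps)
lemma comm_diff: "comm (\<lambda>x. F x - G x) as = (\<lambda>x. comm F as x - comm G as x)"
  by (induction as arbitrary: F G) (auto simp: cm_diff)
lemma cm_scal: "cm (\<lambda>x. c * F x) a = (\<lambda>x. c * cm F a x)"
  by (simp add: cm_def fun_eq_iff algebra_simps)
lemma comm_scal: "comm (\<lambda>x. c * F x) as = (\<lambda>x. c * comm F as x)"
  by (induction as arbitrary: F) (auto simp: cm_scal)
lemma comm_sum: "finite S \<Longrightarrow> comm (\<lambda>x. \<Sum>i\<in>S. F i x) as = (\<lambda>x. \<Sum>i\<in>S. comm (F i) as x)"
  by (induction S rule: finite_induct) (auto simp: comm_add)

lemma sy_add: "sy (\<lambda>x. F x + G x) as = sy F as + sy G as" by (simp add: sy_def comm_add)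
lemma sy_diff: "sy (\<lambda>x. F x - G x) as = sy F as - sy G as" by (simp add: sy_def comm_diff)
lemma sy_scal: "sy (\<lambda>x. c * F x) as = c * sy F as" by (simp add: sy_def comm_scal)
lemma sy_sum: "finite S \<Longrightarrow> sy (\<lambda>x. \<Sum>i\<in>S. F i x) as = (\<Sum>i\<in>S. sy (F i) as)"
  by (simp add: sy_def comm_sum)
lemma sy_zero[simp]: "sy (\<lambda>x. 0) as = 0" by (simp add: sy_def)
lemma sy_Cons: "sy P (a # as) = sy (cm P a) as" by (simp add: sy_def)

lemma klin_mult: "klin phi (\<lambda>x. c * x)" by (simp add: klin_def algebra_simps)
lemma klin_id: "klin phi (\<lambda>x. x)" by (simp add: klin_def)
lemma klin_zero: "klin phi (\<lambda>x. 0)" by (simp add: klin_def)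
lemma klin_add: "klin phi F \<Longrightarrow> klin phi G \<Longrightarrow> klin phi (\<lambda>x. F x + G x)"
  by (simp add: klin_def algebra_simps)
lemma klin_diff: "klin phi F \<Longrightarrow> klin phi G \<Longrightarrow> klin phi (\<lambda>x. F x - G x)"
  by (simp add: klin_def algebra_simps)
lemma klin_scal: "klin phi F \<Longrightarrow> klin phi (\<lambda>x. c * F x)"
  by (simp add: klin_def algebra_simps)
lemma klin_sum: "finite S \<Longrightarrow> (\<And>i. i \<in> S \<Longrightarrow> klin phi (F i)) \<Longrightarrow> klin phi (\<lambda>x. \<Sum>i\<in>S. F i x)"
  by (induction S rule: finite_induct) (auto intro: klin_add klin_zero)
lemma klin_comp: "klin phi F \<Longrightarrow> klin phi G \<Longrightarrow> klin phi (\<lambda>x. F (G x))"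
  by (simp add: klin_def)
lemma klin_comp': "klin phi F \<Longrightarrow> klin phi G \<Longrightarrow> klin phi (F \<circ> G)"
  by (simp add: klin_def)
lemma klin_cm: assumes "klin phi F" shows "klin phi (cm F a)"
  unfolding klin_def cm_def
proof (intro conjI allI)
  fix x y show "F (a*(x+y)) - a * F (x+y) = (F (a*x) - a*F x) + (F (a*y) - a*F y)"
    using assms by (simp add: klin_def distrib_left algebra_simps)
next
  fix c x have e: "a * (phi c * x) = phi c * (a * x)" by (simp add: algebra_simps)
  have f: "F (phi c * (a * x)) = phi c * F (a * x)" "F (phi c * x) = phi c * F x"
    using assms unfolding klin_def by blast+
  show "F (a * (phi c * x)) - a * F (phi c * x) = phi c * (F (a * x) - a * F x)"
    unfolding e f by (simp add: algebra_simps)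
qed
lemma klin_0: assumes "klin phi F" shows "F 0 = 0"
proof -
  have "F (0+0) = F 0 + F 0" using assms by (simp only: klin_def)
  then show ?thesis by simp
qed
lemma klin_minus: assumes "klin phi F" shows "F (x - y) = F x - F y"
proof -
  have "F (x - y + y) = F (x - y) + F y" using assms by (simp only: klin_def)
  then show ?thesis by (simp add: algebra_simps)
qed
lemma klin_sum_app: assumes "klin phi F" "finite S" shows "F (\<Sum>i\<in>S. g i) = (\<Sum>i\<in>S. F (g i))"
  using assms(2) by (induction S rule: finite_induct) (use assms in \<open>auto simp: klin_0 klin_def\<close>)

lemma vanish_mono: "vanish p R \<Longrightarrow> p \<le> q \<Longrightarrow> vanish q R"
  by (simp add: vanish_def)
lemma vanish_0: "vanish 0 R \<longleftrightarrow> R = (\<lambda>x. 0)"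
proof
  assume "vanish 0 R"
  then have "comm R [] = (\<lambda>x. 0)" unfolding vanish_def by blast
  then show "R = (\<lambda>x. 0)" by simp
qed (simp add: vanish_def)
lemma vanish_Suc: "vanish (Suc k) R \<longleftrightarrow> (\<forall>a. vanish k (cm R a))"
proof
  assume h: "vanish (Suc k) R"
  show "\<forall>a. vanish k (cm R a)" unfolding vanish_def
  proof (intro allI impI)
    fix a and as :: "'a list" assume "k \<le> length as"
    then have "Suc k \<le> length (a # as)" by simp
    then have "comm R (a # as) = (\<lambda>x. 0)" using h unfolding vanish_def by blast
    then show "comm (cm R a) as = (\<lambda>x. 0)" by simp
  qed
next
  assume h: "\<forall>a. vanish k (cm R a)"
  show "vanish (Suc k) R" unfolding vanish_def
  proof (intro allI impI)
    fix as :: "'a list" assume L: "Suc k \<le> length as"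
    then obtain a bs where as: "as = a # bs" by (cases as) auto
    with L have "k \<le> length bs" by simp
    then show "comm R as = (\<lambda>x. 0)" using h as unfolding vanish_def by simp
  qed
qed
lemma vanish_cm: "vanish k R \<Longrightarrow> vanish (k - 1) (cm R a)"
  by (cases k) (auto simp: vanish_0 vanish_Suc)
lemma vanish_zero: "vanish k (\<lambda>x. 0)" by (simp add: vanish_def)
lemma vanish_add: "vanish k F \<Longrightarrow> vanish k G \<Longrightarrow> vanish k (\<lambda>x. F x + G x)"
  by (simp add: vanish_def comm_add)
lemma vanish_diff: "vanish k F \<Longrightarrow> vanish k G \<Longrightarrow> vanish k (\<lambda>x. F x - G x)"
  by (simp add: vanish_def comm_diff)
lemma vanish_scal: "vanish k F \<Longrightarrow> vanish k (\<lambda>x. c * F x)"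
  by (simp add: vanish_def comm_scal)
lemma vanish_sum: "finite S \<Longrightarrow> (\<And>i. i \<in> S \<Longrightarrow> vanish k (F i)) \<Longrightarrow> vanish k (\<lambda>x. \<Sum>i\<in>S. F i x)"
  by (simp add: vanish_def comm_sum)
lemma vanish_sy: "vanish k R \<Longrightarrow> k \<le> length as \<Longrightarrow> sy R as = 0"
  by (simp add: vanish_def sy_def)

lemma mult_of: "(\<And>b. cm F b = (\<lambda>x. 0)) \<Longrightarrow> F = (\<lambda>x. x * F 1)"
proof
  fix x assume "\<And>b. cm F b = (\<lambda>x. 0)"
  then have "cm F x 1 = 0" by simp
  then show "F x = x * F 1" by (simp add: cm_def)
qed

lemma vanish_lower:
  assumes "vanish (Suc (Suc N)) P" and "\<forall>as. length as = Suc N \<longrightarrow> sy P as = 0"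
  shows "vanish (Suc N) P"
  unfolding vanish_def
proof (intro allI impI)
  fix as :: "'a list" assume L: "Suc N \<le> length as"
  show "comm P as = (\<lambda>x. 0)"
  proof (cases "length as = Suc N")
    case True
    have "\<And>b. cm (comm P as) b = (\<lambda>x. 0)"
    proof -
      fix b
      have "cm (comm P as) b = comm P (as @ [b])" by (simp add: comm_append)
      also have "\<dots> = (\<lambda>x. 0)" using assms(1) True unfolding vanish_def by simp
      finally show "cm (comm P as) b = (\<lambda>x. 0)" .
    qed
    then have "comm P as = (\<lambda>x. x * comm P as 1)" by (rule mult_of)
    moreover have "comm P as 1 = 0" using assms(2) True by (simp add: sy_def)
    ultimately show ?thesis by simp
  next
    case False
    then show ?thesis using assms(1) L unfolding vanish_def by simp
  qed
qed

lemma cm_comp: "klin phi R \<Longrightarrow> cm (\<lambda>x. R (Q x)) a = (\<lambda>x. cm R a (Q x) + R (cm Q a x))"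
  by (simp add: cm_def fun_eq_iff klin_minus)

lemma zero_comp: assumes "klin phi R" "vanish p R" "vanish q Q" "p = 0 \<or> q = 0"
  shows "(\<lambda>x. R (Q x)) = (\<lambda>x. 0)"
proof (cases "p = 0")
  case True
  then have "R = (\<lambda>x. 0)" using assms(2) by (simp only: vanish_0)
  then show ?thesis by simp
next
  case False
  then have "q = 0" using assms(4) by simp
  then have "Q = (\<lambda>x. 0)" using assms(3) vanish_0 by blast
  then show ?thesis using klin_0[OF assms(1)] by simp
qed

lemma comp_vanish_aux:
  "\<forall>R Q p q. klin phi R \<longrightarrow> klin phi Q \<longrightarrow> vanish p R \<longrightarrow> vanish q Q \<longrightarrow> p + q \<le> Suc (length as)
     \<longrightarrow> comm (\<lambda>x. R (Q x)) as = (\<lambda>x. 0)"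
proof (induction as)
  case Nil
  show ?case
  proof (intro allI impI)
    fix R Q :: "'a \<Rightarrow> 'a" and p q :: nat
    assume h: "klin phi R" "klin phi Q" "vanish p R" "vanish q Q" "p + q \<le> Suc (length ([]::'a list))"
    from h(5) have "p + q \<le> 1" by simp
    then have "p = 0 \<or> q = 0" by arith
    then have "(\<lambda>x. R (Q x)) = (\<lambda>x. 0)" by (rule zero_comp[OF h(1) h(3) h(4)])
    then show "comm (\<lambda>x. R (Q x)) [] = (\<lambda>x. 0)" by (simp only: comm.simps)
  qed
next
  case (Cons a as)
  show ?case
  proof (intro allI impI)
    fix R Q :: "'a \<Rightarrow> 'a" and p q :: nat
    assume h: "klin phi R" "klin phi Q" "vanish p R" "vanish q Q" "p + q \<le> Suc (length (a # as))"
    show "comm (\<lambda>x. R (Q x)) (a # as) = (\<lambda>x. 0)"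
    proof (cases "p = 0 \<or> q = 0")
      case True
      then have "(\<lambda>x. R (Q x)) = (\<lambda>x. 0)" by (rule zero_comp[OF h(1) h(3) h(4)])
      then show ?thesis by simp
    next
      case False
      have a1: "p - 1 + q \<le> Suc (length as)" and a2: "p + (q - 1) \<le> Suc (length as)"
        using h(5) False by auto
      have 1: "comm (\<lambda>x. cm R a (Q x)) as = (\<lambda>x. 0)"
        by (rule Cons.IH[rule_format, OF klin_cm[OF h(1)] h(2) vanish_cm[OF h(3)] h(4) a1])
      have 2: "comm (\<lambda>x. R (cm Q a x)) as = (\<lambda>x. 0)"
        by (rule Cons.IH[rule_format, OF h(1) klin_cm[OF h(2)] h(3) vanish_cm[OF h(4)] a2])
      have e: "comm (\<lambda>x. R (Q x)) (a # as) = comm (\<lambda>x. cm R a (Q x) + R (cm Q a x)) as"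
        by (simp only: comm.simps cm_comp[OF h(1), of Q a])
      show ?thesis unfolding e comm_add 1 2 by simp
    qed
  qed
qed

lemma comp_vanish: assumes "klin phi R" "klin phi Q" "vanish p R" "vanish q Q" shows "vanish (p + q - 1) (\<lambda>x. R (Q x))"
  unfolding vanish_def[of "p+q-1"]
proof (intro allI impI)
  fix as :: "'b list" assume "p+q-1 \<le> length as"
  then have L: "p+q \<le> Suc (length as)" by linarith
  show "comm (\<lambda>x. R (Q x)) as = (\<lambda>x. 0)" using comp_vanish_aux[of phi as] assms L by blast
qed

lemma DV: "diffop phi d P \<longleftrightarrow> klin phi P \<and> vanish (Suc d) P"
proof (induction d arbitrary: P)
  case 0
  show ?case
  proof
    assume "diffop phi 0 P"
    then obtain a where "P = (\<lambda>x. a * x)" by auto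
    moreover have "cm (\<lambda>x. a * x) b = (\<lambda>x. 0)" for b by (simp add: cm_def fun_eq_iff algebra_simps)
    ultimately show "klin phi P \<and> vanish (Suc 0) P"
      by (simp add: klin_mult vanish_Suc vanish_0)
  next
    assume "klin phi P \<and> vanish (Suc 0) P"
    then have "\<And>b. cm P b = (\<lambda>x. 0)" by (simp add: vanish_Suc vanish_0)
    then have eq: "P = (\<lambda>x. x * P 1)" by (rule mult_of)
    have "P x = P 1 * x" for x using fun_cong[OF eq, of x] by (simp add: mult.commute)
    then have "P = (\<lambda>x. P 1 * x)" by (rule ext)
    then show "diffop phi 0 P" by auto
  qed
next
  case (Suc d)
  show ?case
  proof
    assume "diffop phi (Suc d) P"
    then show "klin phi P \<and> vanish (Suc (Suc d)) P"
      using Suc.IH by (auto simp: vanish_Suc cm_def)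
  next
    assume h: "klin phi P \<and> vanish (Suc (Suc d)) P"
    then have "\<forall>a. diffop phi d (cm P a)" using Suc.IH klin_cm vanish_Suc by blast
    then show "diffop phi (Suc d) P" using h by (simp add: cm_def)
  qed
qed



lemma HS_0: "HS phi D \<Longrightarrow> D 0 = id" by (simp add: HS_def)
lemma HS_klin: "HS phi D \<Longrightarrow> klin phi (D i)" by (simp add: HS_def)
lemma HS_mult: "HS phi D \<Longrightarrow> D i (x*y) = (\<Sum>r\<le>i. D r x * D (i-r) y)" by (simp add: HS_def)

lemma HS_cm: assumes "HS phi D" shows "cm (D m) a = (\<lambda>x. \<Sum>r\<in>{1..m}. D r a * D (m-r) x)"
proof (rule ext)
  fix x
  have "{..m} = insert 0 {1..m}" by auto
  then have "(\<Sum>r\<le>m. D r a * D (m-r) x) = D 0 a * D m x + (\<Sum>r\<in>{1..m}. D r a * D (m-r) x)" by simp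
  then show "cm (D m) a x = (\<Sum>r\<in>{1..m}. D r a * D (m-r) x)"
    using assms by (simp add: cm_def HS_mult HS_0)
qed

lemma HS_vanish: assumes "HS phi D" shows "vanish (Suc m) (D m)"
proof (induction m rule: less_induct)
  case (less m)
  show ?case unfolding vanish_Suc
  proof
    fix a
    show "vanish m (cm (D m) a)" unfolding HS_cm[OF assms]
    proof (rule vanish_sum)
      fix r assume r: "r \<in> {1..m}"
      then have "vanish (Suc (m - r)) (D (m - r))" using less.IH by simp
      then have "vanish m (D (m - r))" by (rule vanish_mono) (use r in auto)
      then show "vanish m (\<lambda>x. D r a * D (m - r) x)" by (rule vanish_scal)
    qed simp
  qed
qed

lemma HS_rem: assumes "HS phi D"
  shows "vanish (m - 1) (\<lambda>x. cm (D m) a x - (if 0 < m then D 1 a * D (m-1) x else 0))"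
proof (cases "m = 0")
  case True
  then show ?thesis using HS_cm[OF assms, of 0 a] by (simp add: vanish_zero)
next
  case False
  have "{1..m} = insert 1 {2..m}" using False by auto
  then have e: "(\<lambda>x. cm (D m) a x - (if 0 < m then D 1 a * D (m-1) x else 0))
      = (\<lambda>x. \<Sum>r\<in>{2..m}. D r a * D (m-r) x)"
    using False by (simp add: HS_cm[OF assms])
  show ?thesis unfolding e
  proof (rule vanish_sum)
    fix r assume r: "r \<in> {2..m}"
    have "vanish (Suc (m - r)) (D (m - r))" using HS_vanish[OF assms] .
    then have "vanish (m - 1) (D (m - r))" by (rule vanish_mono) (use r in auto)
    then show "vanish (m - 1) (\<lambda>x. D r a * D (m - r) x)" by (rule vanish_scal)
  qed simp
qed

definition dec :: "(nat \<Rightarrow> nat) \<Rightarrow> nat \<Rightarrow> nat \<Rightarrow> nat" where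
  "dec \<alpha> j = \<alpha>(j := \<alpha> j - 1)"

lemma vanish_id: "vanish (Suc 0) id"
  by (simp add: vanish_Suc cm_def vanish_0)

locale HSset =
  fixes phi :: "'k::comm_ring_1 \<Rightarrow> 'a::comm_ring_1" and Dd :: "nat \<Rightarrow> nat \<Rightarrow> 'a \<Rightarrow> 'a" and n :: nat
  assumes hs: "\<forall>j<n. HS phi (Dd j)"
    and span: "\<forall>\<delta>\<in>Der phi. \<exists>b :: nat \<Rightarrow> 'a. \<delta> = (\<lambda>x. \<Sum>j<n. b j * Dd j 1 x)"
    and indep: "\<forall>b :: nat \<Rightarrow> 'a. (\<lambda>x. \<Sum>j<n. b j * Dd j 1 x) = (\<lambda>x. 0) \<longrightarrow> (\<forall>j<n. b j = 0)"
begin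

lemma Dcomp_cong: "(\<forall>j<m. \<alpha> j = \<beta> j) \<Longrightarrow> Dcomp Dd m \<alpha> = Dcomp Dd m \<beta>"
  by (induction m) auto

lemma Dcomp_klin: "m \<le> n \<Longrightarrow> klin phi (Dcomp Dd m \<alpha>)"
proof (induction m)
  case 0 then show ?case using klin_id[of phi] by (simp add: id_def)
next
  case (Suc m)
  have h: "HS phi (Dd m)" using hs Suc by simp
  have ih: "klin phi (Dcomp Dd m \<alpha>)" using Suc by simp
  have "klin phi (\<lambda>x. Dcomp Dd m \<alpha> (Dd m (\<alpha> m) x))" by (rule klin_comp[OF ih HS_klin[OF h]])
  then show ?case by (simp add: o_def)
qed

lemma Dcomp_vanish: "m \<le> n \<Longrightarrow> vanish (Suc (\<Sum>j<m. \<alpha> j)) (Dcomp Dd m \<alpha>)"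
proof (induction m)
  case 0 then show ?case using vanish_id by (simp add: id_def)
next
  case (Suc m)
  have h: "HS phi (Dd m)" using hs Suc by simp
  have "vanish (Suc (\<Sum>j<m. \<alpha> j) + Suc (\<alpha> m) - 1) (\<lambda>x. Dcomp Dd m \<alpha> (Dd m (\<alpha> m) x))"
    by (rule comp_vanish[OF Dcomp_klin HS_klin[OF h] Suc.IH HS_vanish[OF h]]) (use Suc in auto)
  then show ?case by (simp add: o_def)
qed

lemma Dcomp_zero: "m \<le> n \<Longrightarrow> Dcomp Dd m (\<lambda>_. 0) = id"
proof (induction m)
  case (Suc m)
  have h: "HS phi (Dd m)" using hs Suc by simp
  then show ?case using Suc HS_0[OF h] by simp
qed simp

end


context HSset begin

lemma K: "m \<le> n \<Longrightarrow> vanish ((\<Sum>j<m. \<alpha> j) - 1)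
   (\<lambda>x. cm (Dcomp Dd m \<alpha>) a x - (\<Sum>j<m. (if 0 < \<alpha> j then Dd j 1 a else 0) * Dcomp Dd m (dec \<alpha> j) x))"
proof (induction m)
  case 0 then show ?case by (simp add: cm_def vanish_zero)
next
  case (Suc m)
  have h: "HS phi (Dd m)" using hs Suc by simp
  define X where "X = Dcomp Dd m \<alpha>"
  define Y where "Y = Dd m (\<alpha> m)"
  define p where "p = (\<Sum>j<m. \<alpha> j)"
  define q where "q = \<alpha> m"
  define b where "b = Dd m 1 a"
  define c where "c = (\<lambda>j. if 0 < \<alpha> j then Dd j 1 a else 0)"
  define T where "T = (\<lambda>x. \<Sum>j<m. c j * Dcomp Dd m (dec \<alpha> j) x)"
  define R1 where "R1 = (\<lambda>x. cm X a x - T x)"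
  define R2 where "R2 = (\<lambda>x. cm Y a x - (if 0 < q then b * Dd m (q-1) x else 0))"
  have kX: "klin phi X" unfolding X_def using Suc by (simp add: Dcomp_klin)
  have kY: "klin phi Y" unfolding Y_def using h by (simp add: HS_klin)
  have vX: "vanish (Suc p) X" unfolding X_def p_def using Suc by (simp add: Dcomp_vanish)
  have vY: "vanish (Suc q) Y" unfolding Y_def q_def using h by (simp add: HS_vanish)
  have v1: "vanish (p - 1) R1" using Suc unfolding R1_def X_def T_def p_def c_def by simp
  have v2: "vanish (q - 1) R2" unfolding R2_def Y_def q_def b_def using HS_rem[OF h] by simp
  have kT: "klin phi T" unfolding T_def
    by (rule klin_sum) (use Suc in \<open>auto intro!: klin_scal Dcomp_klin\<close>)
  have k1: "klin phi R1" unfolding R1_def by (rule klin_diff[OF klin_cm[OF kX] kT])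
  have k2: "klin phi R2" unfolding R2_def
    by (rule klin_diff[OF klin_cm[OF kY]]) (cases "0 < q"; simp add: klin_zero klin_scal HS_klin[OF h])
  have eqT: "(\<Sum>j<Suc m. c j * Dcomp Dd (Suc m) (dec \<alpha> j) x)
      = T (Y x) + (if 0 < q then b else 0) * X (Dd m (q - 1) x)" for x
  proof -
    have "(\<Sum>j<m. c j * Dcomp Dd (Suc m) (dec \<alpha> j) x) = T (Y x)"
      unfolding T_def Y_def by (rule sum.cong) (auto simp: dec_def)
    moreover have "Dcomp Dd m (dec \<alpha> m) = X" unfolding X_def by (rule Dcomp_cong) (simp add: dec_def)
    ultimately show ?thesis by (simp add: c_def b_def q_def dec_def)
  qed
  have eqG: "(\<lambda>x. cm (Dcomp Dd (Suc m) \<alpha>) a x - (\<Sum>j<Suc m. c j * Dcomp Dd (Suc m) (dec \<alpha> j) x))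
     = (\<lambda>x. (R1 (Y x) + (if 0 < q then cm X b (Dd m (q-1) x) else 0)) + X (R2 x))"
  proof (rule ext)
    fix x
    have d: "Dcomp Dd (Suc m) \<alpha> = (\<lambda>x. X (Y x))" by (simp add: X_def Y_def o_def)
    have "cm (Dcomp Dd (Suc m) \<alpha>) a x = cm X a (Y x) + X (cm Y a x)"
      unfolding d cm_comp[OF kX, of Y a] by simp
    also have "cm X a (Y x) = T (Y x) + R1 (Y x)" unfolding R1_def by simp
    also have "cm Y a x = R2 x + (if 0 < q then b * Dd m (q-1) x else 0)" unfolding R2_def by simp
    also have "X (R2 x + (if 0 < q then b * Dd m (q-1) x else 0))
        = X (R2 x) + (if 0 < q then b * X (Dd m (q-1) x) + cm X b (Dd m (q-1) x) else 0)"
      using kX klin_0[OF kX] by (simp add: klin_def cm_def)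
    finally show "cm (Dcomp Dd (Suc m) \<alpha>) a x - (\<Sum>j<Suc m. c j * Dcomp Dd (Suc m) (dec \<alpha> j) x)
      = (R1 (Y x) + (if 0 < q then cm X b (Dd m (q-1) x) else 0)) + X (R2 x)"
      unfolding eqT by (simp add: algebra_simps o_def)
  qed
  have t1: "vanish (p + q - 1) (\<lambda>x. R1 (Y x))"
  proof (cases "p = 0")
    case True
    then have "R1 = (\<lambda>x. 0)" using v1 by (simp add: vanish_0)
    then show ?thesis by (simp add: vanish_zero)
  next
    case False
    have "vanish (p - 1 + Suc q - 1) (\<lambda>x. R1 (Y x))" by (rule comp_vanish[OF k1 kY v1 vY])
    then show ?thesis using False by (simp add: Suc_diff_1)
  qed
  have t2: "vanish (p + q - 1) (\<lambda>x. if 0 < q then cm X b (Dd m (q-1) x) else 0)"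
  proof (cases "q = 0")
    case True then show ?thesis by (simp add: vanish_zero)
  next
    case False
    have a: "vanish p (cm X b)" using vanish_cm[OF vX] by simp
    have bq: "vanish (Suc (q - 1)) (Dd m (q - 1))" using HS_vanish[OF h] .
    have "vanish (p + Suc (q - 1) - 1) (\<lambda>x. cm X b (Dd m (q-1) x))"
      by (rule comp_vanish[OF klin_cm[OF kX] HS_klin[OF h] a bq])
    then show ?thesis using False by simp
  qed
  have t3: "vanish (p + q - 1) (\<lambda>x. X (R2 x))"
  proof (cases "q = 0")
    case True
    then have "R2 = (\<lambda>x. 0)" using v2 by (simp add: vanish_0)
    then show ?thesis using klin_0[OF kX] by (simp add: vanish_zero)
  next
    case False
    have "vanish (Suc p + (q - 1) - 1) (\<lambda>x. X (R2 x))" by (rule comp_vanish[OF kX k2 vX v2])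
    then show ?thesis using False by simp
  qed
  have "vanish (p + q - 1) (\<lambda>x. (R1 (Y x) + (if 0 < q then cm X b (Dd m (q-1) x) else 0)) + X (R2 x))"
    by (intro vanish_add t1 t2 t3)
  moreover have c_eq: "\<And>j. (if 0 < \<alpha> j then Dd j 1 a else 0) = c j" by (simp add: c_def)
  ultimately show ?case unfolding c_eq eqG by (simp add: p_def q_def)
qed

abbreviation DD where "DD \<equiv> Dcomp Dd n"

lemma S: assumes "(\<Sum>j<n. \<alpha> j) = Suc k" "length as = k"
  shows "sy (DD \<alpha>) (a # as) = (\<Sum>j<n. (if 0 < \<alpha> j then Dd j 1 a else 0) * sy (DD (dec \<alpha> j)) as)"
proof -
  define T where "T = (\<lambda>x. \<Sum>j<n. (if 0 < \<alpha> j then Dd j 1 a else 0) * DD (dec \<alpha> j) x)"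
  have v: "vanish k (\<lambda>x. cm (DD \<alpha>) a x - T x)" using K[of n \<alpha> a] assms(1) unfolding T_def by simp
  have "cm (DD \<alpha>) a = (\<lambda>x. T x + (cm (DD \<alpha>) a x - T x))" by simp
  then have "sy (DD \<alpha>) (a # as) = sy T as + sy (\<lambda>x. cm (DD \<alpha>) a x - T x) as"
    by (metis sy_Cons sy_add)
  also have "sy (\<lambda>x. cm (DD \<alpha>) a x - T x) as = 0" using vanish_sy[OF v] assms(2) by simp
  also have "sy T as = (\<Sum>j<n. (if 0 < \<alpha> j then Dd j 1 a else 0) * sy (DD (dec \<alpha> j)) as)"
    unfolding T_def by (simp add: sy_sum sy_scal)
  finally show ?thesis by simp
qed

lemma DD_klin: "klin phi (DD \<alpha>)" by (simp add: Dcomp_klin)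
lemma DD_vanish: "vanish (Suc (\<Sum>j<n. \<alpha> j)) (DD \<alpha>)" by (simp add: Dcomp_vanish)
lemma DD_sy_high: "(\<Sum>j<n. \<alpha> j) < length as \<Longrightarrow> sy (DD \<alpha>) as = 0"
  using vanish_sy[OF DD_vanish] by (simp add: Suc_le_eq)
lemma DD_zero: "DD (\<lambda>_. 0) = id" by (simp add: Dcomp_zero)

end


definition mi :: "nat \<Rightarrow> nat \<Rightarrow> (nat \<Rightarrow> nat) set" where
  "mi n N = {\<alpha>. (\<forall>j\<ge>n. \<alpha> j = 0) \<and> (\<Sum>j<n. \<alpha> j) = N}"

definition inc :: "(nat \<Rightarrow> nat) \<Rightarrow> nat \<Rightarrow> nat \<Rightarrow> nat" where
  "inc \<beta> j = \<beta>(j := Suc (\<beta> j))"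

lemma finite_bounded: "finite {\<alpha>::nat\<Rightarrow>nat. (\<forall>j\<ge>n. \<alpha> j = 0) \<and> (\<forall>j. \<alpha> j \<le> d)}"
proof (induction n)
  case 0
  have "{\<alpha>::nat\<Rightarrow>nat. (\<forall>j\<ge>0. \<alpha> j = 0) \<and> (\<forall>j. \<alpha> j \<le> d)} \<subseteq> {\<lambda>_. 0}" by auto
  then show ?case by (rule finite_subset) simp
next
  case (Suc n)
  let ?S = "{\<alpha>::nat\<Rightarrow>nat. (\<forall>j\<ge>n. \<alpha> j = 0) \<and> (\<forall>j. \<alpha> j \<le> d)}"
  have "{\<alpha>::nat\<Rightarrow>nat. (\<forall>j\<ge>Suc n. \<alpha> j = 0) \<and> (\<forall>j. \<alpha> j \<le> d)} \<subseteq> (\<lambda>(f, v). f(n := v)) ` (?S \<times> {..d})"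
  proof
    fix \<alpha> :: "nat \<Rightarrow> nat" assume h: "\<alpha> \<in> {\<alpha>. (\<forall>j\<ge>Suc n. \<alpha> j = 0) \<and> (\<forall>j. \<alpha> j \<le> d)}"
    have e: "\<alpha> = (\<lambda>(f, v). f(n := v)) (\<alpha>(n := 0), \<alpha> n)" by simp
    have "(\<alpha>(n := 0)) j = 0" if "j \<ge> n" for j using h that by (cases "j = n") (auto simp: Suc_le_eq)
    moreover have "\<alpha> j \<le> d" for j using h by simp
    ultimately have m: "(\<alpha>(n := 0), \<alpha> n) \<in> ?S \<times> {..d}" by simp
    show "\<alpha> \<in> (\<lambda>(f, v). f(n := v)) ` (?S \<times> {..d})" by (rule rev_image_eqI[of _ _ _ "\<lambda>(f, v). f(n := v)", OF m e])
  qed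
  then show ?case by (rule finite_subset[OF _ finite_imageI[OF finite_cartesian_product[OF Suc.IH finite_atMost]]])
qed

lemma finite_multi_idx: "finite (multi_idx n d)"
proof (rule finite_subset[OF _ finite_bounded[of n d]])
  show "multi_idx n d \<subseteq> {\<alpha>. (\<forall>j\<ge>n. \<alpha> j = 0) \<and> (\<forall>j. \<alpha> j \<le> d)}"
  proof
    fix \<alpha> assume h: "\<alpha> \<in> multi_idx n d"
    have "\<alpha> j \<le> d" for j
    proof (cases "j < n")
      case True
      then have "\<alpha> j \<le> (\<Sum>j<n. \<alpha> j)" by (intro member_le_sum) auto
      then show ?thesis using h by (simp add: multi_idx_def)
    next
      case False then show ?thesis using h by (simp add: multi_idx_def)
    qed
    then show "\<alpha> \<in> {\<alpha>. (\<forall>j\<ge>n. \<alpha> j = 0) \<and> (\<forall>j. \<alpha> j \<le> d)}" using h by (simp add: multi_idx_def)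
  qed
qed

lemma mi_sub: "mi n N \<subseteq> multi_idx n N" by (auto simp: mi_def multi_idx_def)
lemma finite_mi: "finite (mi n N)" using finite_subset[OF mi_sub finite_multi_idx] .

lemma zero_iff: fixes \<alpha> :: "nat \<Rightarrow> nat" assumes h: "\<forall>j\<ge>n. \<alpha> j = 0" and s: "(\<Sum>j<n. \<alpha> j) = (0::nat)"
  shows "\<alpha> = (\<lambda>_. 0)"
proof
  fix j show "\<alpha> j = 0"
  proof (cases "j < n")
    case True then show ?thesis using s by simp
  next
    case False then show ?thesis using h by simp
  qed
qed

lemma mi_0: "mi n 0 = {\<lambda>_. 0}"
proof
  show "mi n 0 \<subseteq> {\<lambda>_. 0}"
  proof
    fix \<alpha> assume "\<alpha> \<in> mi n 0"
    then have "\<forall>j\<ge>n. \<alpha> j = 0" "(\<Sum>j<n. \<alpha> j) = 0" by (auto simp: mi_def)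
    then show "\<alpha> \<in> {\<lambda>_. 0}" using zero_iff by blast
  qed
qed (auto simp: mi_def)
lemma multi_idx_0: "multi_idx n 0 = {\<lambda>_. 0}"
proof
  show "multi_idx n 0 \<subseteq> {\<lambda>_. 0}"
  proof
    fix \<alpha> assume "\<alpha> \<in> multi_idx n 0"
    then have "\<forall>j\<ge>n. \<alpha> j = 0" "(\<Sum>j<n. \<alpha> j) = 0" by (auto simp: multi_idx_def)
    then show "\<alpha> \<in> {\<lambda>_. 0}" using zero_iff by blast
  qed
qed (auto simp: multi_idx_def)
lemma multi_idx_Suc: "multi_idx n (Suc d) = multi_idx n d \<union> mi n (Suc d)"
  by (auto simp: multi_idx_def mi_def)
lemma multi_idx_disj: "multi_idx n d \<inter> mi n (Suc d) = {}"
  by (auto simp: multi_idx_def mi_def)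

lemma sum_upd: fixes j n :: nat assumes "j < n"
  shows "(\<Sum>i<n. (\<beta>(j := v)) i) + \<beta> j = (\<Sum>i<n. \<beta> i) + (v::nat)"
proof -
  have j: "j \<in> {..<n}" using assms by simp
  have rem: "(\<Sum>i<n. g i) = g j + (\<Sum>i\<in>{..<n} - {j}. g i)" for g :: "nat \<Rightarrow> nat"
    using j by (meson finite_lessThan sum.remove)
  have "(\<Sum>i<n. (\<beta>(j := v)) i) = (\<beta>(j := v)) j + (\<Sum>i\<in>{..<n} - {j}. (\<beta>(j := v)) i)"
    by (rule rem)
  then have "(\<Sum>i<n. (\<beta>(j := v)) i) = v + (\<Sum>i\<in>{..<n} - {j}. (\<beta>(j := v)) i)"
    by (simp only: fun_upd_same)
  also have "(\<Sum>i\<in>{..<n} - {j}. (\<beta>(j := v)) i) = (\<Sum>i\<in>{..<n} - {j}. \<beta> i)"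
    by (rule sum.cong) auto
  finally show ?thesis using rem[of \<beta>] by simp
qed

lemma inc_mi: "j < n \<Longrightarrow> \<beta> \<in> mi n N \<Longrightarrow> inc \<beta> j \<in> mi n (Suc N)"
  using sum_upd[of j n \<beta> "Suc (\<beta> j)"] by (auto simp: mi_def inc_def)
lemma inc_pos[simp]: "0 < inc \<beta> j j" by (simp add: inc_def)
lemma dec_inc: "dec (inc \<beta> j) j = \<beta>" by (auto simp: dec_def inc_def)
lemma pos_lt: "\<alpha> \<in> mi n N \<Longrightarrow> 0 < \<alpha> j \<Longrightarrow> j < n"
  by (auto simp: mi_def) (metis less_irrefl not_le)
lemma dec_mi: "\<alpha> \<in> mi n (Suc N) \<Longrightarrow> 0 < \<alpha> j \<Longrightarrow> dec \<alpha> j \<in> mi n N"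
  using sum_upd[of j n \<alpha> "\<alpha> j - 1"] pos_lt[of \<alpha> n "Suc N" j] by (auto simp: mi_def dec_def)
lemma inc_dec: "0 < \<alpha> j \<Longrightarrow> inc (dec \<alpha> j) j = \<alpha>" by (auto simp: dec_def inc_def)
lemma mi_pos: assumes "\<alpha> \<in> mi n (Suc N)" shows "\<exists>j<n. 0 < \<alpha> j"
proof (rule ccontr)
  assume "\<not> (\<exists>j<n. 0 < \<alpha> j)"
  then have "(\<Sum>j<n. \<alpha> j) = 0" by simp
  then show False using assms by (simp add: mi_def)
qed

lemma RI: assumes "j < n"
  shows "(\<Sum>\<alpha>\<in>mi n (Suc N). if 0 < \<alpha> j then g \<alpha> else 0) = (\<Sum>\<beta>\<in>mi n N. g (inc \<beta> j))"
proof -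
  have "(\<Sum>\<alpha>\<in>mi n (Suc N). if 0 < \<alpha> j then g \<alpha> else 0) = sum g {\<alpha> \<in> mi n (Suc N). 0 < \<alpha> j}"
    by (simp add: sum.inter_filter finite_mi)
  also have "\<dots> = (\<Sum>\<beta>\<in>mi n N. g (inc \<beta> j))"
    by (rule sum.reindex_bij_witness[where i = "\<lambda>\<beta>. inc \<beta> j" and j = "\<lambda>\<alpha>. dec \<alpha> j"])
       (auto simp: inc_dec dec_inc dec_mi inc_mi assms)
  finally show ?thesis .
qed



lemma cm_Cons_add: "klin phi P \<Longrightarrow> cm P (x + y) = (\<lambda>z. cm P x z + cm P y z)"
  by (simp add: cm_def klin_def fun_eq_iff algebra_simps)
lemma cm_Cons_phi: assumes "klin phi P" shows "cm P (phi k * x) = (\<lambda>z. phi k * cm P x z)"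
proof (rule ext)
  fix z
  have "P (phi k * (x * z)) = phi k * P (x * z)" using assms unfolding klin_def by blast
  then have "P (phi k * x * z) = phi k * P (x * z)" by (simp add: mult.assoc)
  then show "cm P (phi k * x) z = phi k * cm P x z" by (simp add: cm_def algebra_simps)
qed
lemma cm_Cons_mult: "cm P (x * y) = (\<lambda>z. y * cm P x z + x * cm P y z + cm (cm P x) y z)"
  by (simp add: cm_def fun_eq_iff algebra_simps)
lemma cm_swap: "cm (cm P x) y = cm (cm P y) x"
  by (simp add: cm_def fun_eq_iff algebra_simps)
lemma sy_swap: "sy P (x # y # as) = sy P (y # x # as)"
  by (simp add: sy_def cm_swap)

context HSset begin

lemma indep': assumes "\<And>x. (\<Sum>j<n. b j * Dd j 1 x) = 0" "j < n" shows "b j = 0"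
proof -
  have "(\<lambda>x. \<Sum>j<n. b j * Dd j 1 x) = (\<lambda>x. 0)" by (rule ext) (rule assms(1))
  then show ?thesis using indep assms(2) by blast
qed

lemma sy_mix: "finite S \<Longrightarrow> sy (\<lambda>x. \<Sum>\<alpha>\<in>S. e \<alpha> * DD \<alpha> x) as = (\<Sum>\<alpha>\<in>S. e \<alpha> * sy (DD \<alpha>) as)"
  by (simp add: sy_sum sy_scal)

lemma DD_id_sy: "sy (DD (\<lambda>_. 0)) [] = 1" by (simp add: DD_zero sy_def)

lemma EXP: assumes "length as = N"
  shows "(\<Sum>\<alpha>\<in>mi n (Suc N). e \<alpha> * sy (DD \<alpha>) (a # as))
       = (\<Sum>j<n. Dd j 1 a * (\<Sum>\<beta>\<in>mi n N. e (inc \<beta> j) * sy (DD \<beta>) as))"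
proof -
  have "(\<Sum>\<alpha>\<in>mi n (Suc N). e \<alpha> * sy (DD \<alpha>) (a # as))
     = (\<Sum>\<alpha>\<in>mi n (Suc N). \<Sum>j<n. (if 0 < \<alpha> j then Dd j 1 a * (e \<alpha> * sy (DD (dec \<alpha> j)) as) else 0))"
  proof (rule sum.cong[OF refl])
    fix \<alpha> assume "\<alpha> \<in> mi n (Suc N)"
    then have "(\<Sum>j<n. \<alpha> j) = Suc N" by (simp add: mi_def)
    then have "sy (DD \<alpha>) (a # as) = (\<Sum>j<n. (if 0 < \<alpha> j then Dd j 1 a else 0) * sy (DD (dec \<alpha> j)) as)"
      by (rule S[OF _ assms])
    then have "e \<alpha> * sy (DD \<alpha>) (a # as) = (\<Sum>j<n. e \<alpha> * ((if 0 < \<alpha> j then Dd j 1 a else 0) * sy (DD (dec \<alpha> j)) as))"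
      by (simp add: sum_distrib_left)
    also have "\<dots> = (\<Sum>j<n. (if 0 < \<alpha> j then Dd j 1 a * (e \<alpha> * sy (DD (dec \<alpha> j)) as) else 0))"
      by (rule sum.cong) (auto simp: algebra_simps)
    finally show "e \<alpha> * sy (DD \<alpha>) (a # as)
       = (\<Sum>j<n. (if 0 < \<alpha> j then Dd j 1 a * (e \<alpha> * sy (DD (dec \<alpha> j)) as) else 0))" .
  qed
  also have "\<dots> = (\<Sum>j<n. \<Sum>\<alpha>\<in>mi n (Suc N). (if 0 < \<alpha> j then Dd j 1 a * (e \<alpha> * sy (DD (dec \<alpha> j)) as) else 0))"
    by (rule sum.swap)
  also have "\<dots> = (\<Sum>j<n. \<Sum>\<beta>\<in>mi n N. Dd j 1 a * (e (inc \<beta> j) * sy (DD (dec (inc \<beta> j) j)) as))"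
    by (rule sum.cong[OF refl]) (rule RI, simp)
  also have "\<dots> = (\<Sum>j<n. Dd j 1 a * (\<Sum>\<beta>\<in>mi n N. e (inc \<beta> j) * sy (DD \<beta>) as))"
    by (simp add: dec_inc sum_distrib_left)
  finally show ?thesis .
qed

lemma U: "(\<And>as. length as = N \<Longrightarrow> (\<Sum>\<alpha>\<in>mi n N. e \<alpha> * sy (DD \<alpha>) as) = 0) \<Longrightarrow> \<alpha> \<in> mi n N \<Longrightarrow> e \<alpha> = 0"
proof (induction N arbitrary: e \<alpha>)
  case 0
  have "(\<Sum>\<alpha>\<in>mi n 0. e \<alpha> * sy (DD \<alpha>) []) = 0" using 0(1)[of "[]"] by simp
  then show ?case using 0(2) by (simp add: mi_0 DD_id_sy)
next
  case (Suc N)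
  have B: "(\<Sum>\<beta>\<in>mi n N. e (inc \<beta> j) * sy (DD \<beta>) as) = 0" if j: "j < n" and L: "length as = N" for j as
  proof (rule indep'[OF _ j])
    fix a
    have "(\<Sum>\<alpha>\<in>mi n (Suc N). e \<alpha> * sy (DD \<alpha>) (a # as)) = 0" using Suc.prems(1) L by simp
    then show "(\<Sum>j<n. (\<Sum>\<beta>\<in>mi n N. e (inc \<beta> j) * sy (DD \<beta>) as) * Dd j 1 a) = 0"
      unfolding EXP[OF L] by (simp add: mult.commute)
  qed
  obtain j where j: "j < n" "0 < \<alpha> j" using mi_pos[OF Suc.prems(2)] by blast
  have "e (inc (dec \<alpha> j) j) = 0"
    by (rule Suc.IH[of "\<lambda>\<beta>. e (inc \<beta> j)", OF B[OF j(1)] dec_mi[OF Suc.prems(2) j(2)]])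
  then show ?case using inc_dec[of \<alpha> j, OF j(2)] by simp
qed

lemma coef_eq: assumes "\<And>as. length as = N \<Longrightarrow> (\<Sum>\<beta>\<in>mi n N. f \<beta> * sy (DD \<beta>) as) = (\<Sum>\<beta>\<in>mi n N. g \<beta> * sy (DD \<beta>) as)"
  and "\<beta> \<in> mi n N" shows "f \<beta> = g \<beta>"
proof -
  have "(\<Sum>\<beta>\<in>mi n N. (f \<beta> - g \<beta>) * sy (DD \<beta>) as) = 0" if "length as = N" for as
    using assms(1)[OF that] by (simp add: left_diff_distrib sum_subtractf)
  then have "f \<beta> - g \<beta> = 0" by (rule U[of N "\<lambda>\<beta>. f \<beta> - g \<beta>", OF _ assms(2)])
  then show ?thesis by simp
qed

end


context HSset begin

lemma Eexist: "klin phi P \<Longrightarrow> vanish (Suc N) P \<Longrightarrow>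
  \<exists>e. \<forall>as. length as = N \<longrightarrow> sy P as = (\<Sum>\<alpha>\<in>mi n N. e \<alpha> * sy (DD \<alpha>) as)"
proof (induction N arbitrary: P)
  case 0
  show ?case
  proof (rule exI[of _ "\<lambda>_. P 1"], intro allI impI)
    fix as :: "'a list" assume "length as = 0"
    then show "sy P as = (\<Sum>\<alpha>\<in>mi n 0. P 1 * sy (DD \<alpha>) as)" by (simp add: mi_0 sy_def DD_zero)
  qed
next
  case (Suc N)
  have kP: "klin phi P" and vP: "vanish (Suc (Suc N)) P" by fact+
  have cmP1: "klin phi (cm P a)" for a using kP klin_cm by blast
  have cmP2: "vanish (Suc N) (cm P a)" for a using vP vanish_Suc by blast
  define c where "c a = (SOME e. \<forall>as. length as = N \<longrightarrow> sy (cm P a) as = (\<Sum>\<beta>\<in>mi n N. e \<beta> * sy (DD \<beta>) as))" for a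
  have cP: "sy P (a # as) = (\<Sum>\<beta>\<in>mi n N. c a \<beta> * sy (DD \<beta>) as)" if "length as = N" for a as
  proof -
    have "\<exists>e. \<forall>as. length as = N \<longrightarrow> sy (cm P a) as = (\<Sum>\<beta>\<in>mi n N. e \<beta> * sy (DD \<beta>) as)"
      by (rule Suc.IH[OF cmP1 cmP2])
    then have "\<forall>as. length as = N \<longrightarrow> sy (cm P a) as = (\<Sum>\<beta>\<in>mi n N. c a \<beta> * sy (DD \<beta>) as)"
      unfolding c_def by (rule someI_ex)
    then show ?thesis using that by (simp add: sy_Cons)
  qed
  have der: "(\<lambda>a. c a \<beta>) \<in> Der phi" if b: "\<beta> \<in> mi n N" for \<beta>
  proof -
    have add: "c (x + y) \<beta> = c x \<beta> + c y \<beta>" for x y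
    proof (rule coef_eq[OF _ b])
      fix as :: "'a list" assume L: "length as = N"
      have "sy P ((x+y) # as) = sy P (x # as) + sy P (y # as)" by (simp add: sy_Cons cm_Cons_add[OF kP] sy_add)
      then show "(\<Sum>\<beta>\<in>mi n N. c (x+y) \<beta> * sy (DD \<beta>) as) = (\<Sum>\<beta>\<in>mi n N. (c x \<beta> + c y \<beta>) * sy (DD \<beta>) as)"
        using cP[OF L] by (simp add: distrib_right sum.distrib)
    qed
    have ph: "c (phi k * x) \<beta> = phi k * c x \<beta>" for k x
    proof (rule coef_eq[OF _ b])
      fix as :: "'a list" assume L: "length as = N"
      have "sy P ((phi k * x) # as) = phi k * sy P (x # as)" by (simp add: sy_Cons cm_Cons_phi[OF kP] sy_scal)
      then show "(\<Sum>\<beta>\<in>mi n N. c (phi k * x) \<beta> * sy (DD \<beta>) as) = (\<Sum>\<beta>\<in>mi n N. (phi k * c x \<beta>) * sy (DD \<beta>) as)"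
        using cP[OF L] by (simp add: sum_distrib_left mult.assoc)
    qed
    have mu: "c (x * y) \<beta> = y * c x \<beta> + x * c y \<beta>" for x y
    proof (rule coef_eq[OF _ b])
      fix as :: "'a list" assume L: "length as = N"
      have "sy P ((x*y) # as) = y * sy P (x # as) + x * sy P (y # as) + sy P (x # y # as)"
        by (simp add: sy_Cons cm_Cons_mult sy_add sy_scal)
      moreover have "sy P (x # y # as) = 0" using vanish_sy[OF vP] L by simp
      ultimately have "sy P ((x*y) # as) = y * sy P (x # as) + x * sy P (y # as)" by simp
      then show "(\<Sum>\<beta>\<in>mi n N. c (x*y) \<beta> * sy (DD \<beta>) as) = (\<Sum>\<beta>\<in>mi n N. (y * c x \<beta> + x * c y \<beta>) * sy (DD \<beta>) as)"
        using cP[OF L] by (simp add: sum_distrib_left distrib_right sum.distrib mult.assoc)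
    qed
    show ?thesis unfolding Der_def klin_def using add ph mu by (simp add: algebra_simps)
  qed
  define B where "B \<beta> = (SOME b. (\<lambda>a. c a \<beta>) = (\<lambda>x. \<Sum>j<n. b j * Dd j 1 x))" for \<beta>
  have cB: "c a \<beta> = (\<Sum>j<n. B \<beta> j * Dd j 1 a)" if "\<beta> \<in> mi n N" for a \<beta>
  proof -
    have "\<exists>b. (\<lambda>a. c a \<beta>) = (\<lambda>x. \<Sum>j<n. b j * Dd j 1 x)" using span der[OF that] by blast
    then have "(\<lambda>a. c a \<beta>) = (\<lambda>x. \<Sum>j<n. B \<beta> j * Dd j 1 x)" unfolding B_def by (rule someI_ex)
    from fun_cong[OF this, of a] show ?thesis by simp
  qed
  have eq1: "sy P (a # as) = (\<Sum>j<n. Dd j 1 a * (\<Sum>\<beta>\<in>mi n N. B \<beta> j * sy (DD \<beta>) as))" if L: "length as = N" for a as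
  proof -
    have "sy P (a # as) = (\<Sum>\<beta>\<in>mi n N. (\<Sum>j<n. B \<beta> j * Dd j 1 a) * sy (DD \<beta>) as)"
      unfolding cP[OF L] by (rule sum.cong[OF refl]) (simp add: cB)
    also have "\<dots> = (\<Sum>\<beta>\<in>mi n N. \<Sum>j<n. Dd j 1 a * (B \<beta> j * sy (DD \<beta>) as))"
      by (rule sum.cong[OF refl]) (simp only: sum_distrib_right, rule sum.cong[OF refl], simp add: mult_ac)
    also have "\<dots> = (\<Sum>j<n. \<Sum>\<beta>\<in>mi n N. Dd j 1 a * (B \<beta> j * sy (DD \<beta>) as))" by (rule sum.swap)
    also have "\<dots> = (\<Sum>j<n. Dd j 1 a * (\<Sum>\<beta>\<in>mi n N. B \<beta> j * sy (DD \<beta>) as))" by (simp add: sum_distrib_left)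
    finally show ?thesis .
  qed
  have Sym: "B (inc \<gamma> j) i = B (inc \<gamma> i) j"
    if NN: "N = Suc N'" and g: "\<gamma> \<in> mi n N'" and i: "i < n" and j: "j < n" for N' \<gamma> i j
  proof -
    define X where "X as j i = (\<Sum>\<gamma>\<in>mi n N'. B (inc \<gamma> i) j * sy (DD \<gamma>) as)" for as j i
    have F: "sy P (a # c' # as) = (\<Sum>j<n. Dd j 1 a * (\<Sum>i<n. Dd i 1 c' * X as j i))"
      if L: "length as = N'" for a c' as
    proof -
      have L': "length (c' # as) = N" using L NN by simp
      have "sy P (a # c' # as) = (\<Sum>j<n. Dd j 1 a * (\<Sum>\<beta>\<in>mi n (Suc N'). B \<beta> j * sy (DD \<beta>) (c' # as)))"
        using eq1[OF L'] NN by simp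
      also have "\<dots> = (\<Sum>j<n. Dd j 1 a * (\<Sum>i<n. Dd i 1 c' * X as j i))"
        unfolding X_def EXP[OF L] by (rule refl)
      finally show ?thesis .
    qed
    have sw: "(\<Sum>j<n. Dd j 1 a * (\<Sum>i<n. Dd i 1 c' * X as j i)) = (\<Sum>j<n. Dd j 1 a * (\<Sum>i<n. Dd i 1 c' * X as i j))"
      if L: "length as = N'" for a c' as
    proof -
      have "(\<Sum>j<n. Dd j 1 a * (\<Sum>i<n. Dd i 1 c' * X as j i)) = sy P (a # c' # as)" using F[OF L] by simp
      also have "\<dots> = sy P (c' # a # as)" by (rule sy_swap)
      also have "\<dots> = (\<Sum>j<n. Dd j 1 c' * (\<Sum>i<n. Dd i 1 a * X as j i))" using F[OF L] by simp
      also have "\<dots> = (\<Sum>j<n. \<Sum>i<n. Dd i 1 a * (Dd j 1 c' * X as j i))"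
        by (simp add: sum_distrib_left mult_ac)
      also have "\<dots> = (\<Sum>i<n. \<Sum>j<n. Dd i 1 a * (Dd j 1 c' * X as j i))" by (rule sum.swap)
      also have "\<dots> = (\<Sum>i<n. Dd i 1 a * (\<Sum>j<n. Dd j 1 c' * X as j i))" by (simp add: sum_distrib_left)
      finally show ?thesis .
    qed
    have s1: "(\<Sum>i<n. Dd i 1 c' * X as j i) = (\<Sum>i<n. Dd i 1 c' * X as i j)"
      if L: "length as = N'" and j: "j < n" for c' as j
    proof -
      have "(\<Sum>i<n. Dd i 1 c' * X as j i) - (\<Sum>i<n. Dd i 1 c' * X as i j) = 0"
      proof (rule indep'[OF _ j, where b = "\<lambda>j. (\<Sum>i<n. Dd i 1 c' * X as j i) - (\<Sum>i<n. Dd i 1 c' * X as i j)"])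
        fix a
        show "(\<Sum>j<n. ((\<Sum>i<n. Dd i 1 c' * X as j i) - (\<Sum>i<n. Dd i 1 c' * X as i j)) * Dd j 1 a) = 0"
          using sw[OF L, of a c'] by (simp add: left_diff_distrib right_diff_distrib sum_subtractf mult.commute)
      qed
      then show ?thesis by simp
    qed
    have s2: "X as j i = X as i j" if L: "length as = N'" and j: "j < n" and i: "i < n" for as j i
    proof -
      have "X as j i - X as i j = 0"
      proof (rule indep'[OF _ i, where b = "\<lambda>i. X as j i - X as i j"])
        fix c'
        show "(\<Sum>i<n. (X as j i - X as i j) * Dd i 1 c') = 0"
          using s1[OF L j, of c'] by (simp add: left_diff_distrib right_diff_distrib sum_subtractf mult.commute)
      qed
      then show ?thesis by simp
    qed
    have "B (inc \<gamma> i) j = B (inc \<gamma> j) i"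
    proof (rule coef_eq[OF _ g])
      fix as :: "'a list" assume L: "length as = N'"
      show "(\<Sum>\<gamma>\<in>mi n N'. B (inc \<gamma> i) j * sy (DD \<gamma>) as) = (\<Sum>\<gamma>\<in>mi n N'. B (inc \<gamma> j) i * sy (DD \<gamma>) as)"
        using s2[OF L j i] unfolding X_def .
    qed
    then show ?thesis by simp
  qed
  define J where "J \<alpha> = (LEAST j. 0 < \<alpha> j)" for \<alpha> :: "nat \<Rightarrow> nat"
  define e' where "e' \<alpha> = B (dec \<alpha> (J \<alpha>)) (J \<alpha>)" for \<alpha>
  have SC: "e' (inc \<beta> j) = B \<beta> j" if b: "\<beta> \<in> mi n N" and j: "j < n" for \<beta> j
  proof -
    have pos: "0 < inc \<beta> j j" by simp
    have iJ: "0 < inc \<beta> j (J (inc \<beta> j))" unfolding J_def by (rule LeastI[of _ j]) (rule pos)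
    show ?thesis
    proof (cases "J (inc \<beta> j) = j")
      case True then show ?thesis by (simp add: e'_def dec_inc)
    next
      case False
      define i where "i = J (inc \<beta> j)"
      have ij: "i \<noteq> j" using False i_def by simp
      have "0 < inc \<beta> j i" using iJ by (simp only: i_def)
      moreover have "inc \<beta> j i = \<beta> i" using ij by (simp add: inc_def)
      ultimately have bi: "0 < \<beta> i" by simp
      have ilt: "i < n" using pos_lt[OF b bi] .
      obtain N' where NN: "N = Suc N'" using b bi by (cases N) (auto simp: mi_0)
      define \<gamma> where "\<gamma> = dec \<beta> i"
      have g: "\<gamma> \<in> mi n N'" unfolding \<gamma>_def by (rule dec_mi) (use b bi NN in auto)
      have b\<gamma>: "\<beta> = inc \<gamma> i" unfolding \<gamma>_def using inc_dec[of \<beta> i] bi by simp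
      have d: "dec (inc \<beta> j) i = inc \<gamma> j" unfolding \<gamma>_def
        by (rule ext) (use ij in \<open>auto simp: dec_def inc_def\<close>)
      have "e' (inc \<beta> j) = B (inc \<gamma> j) i" unfolding e'_def i_def[symmetric] d ..
      also have "\<dots> = B (inc \<gamma> i) j" by (rule Sym[OF NN g ilt j])
      finally show ?thesis using b\<gamma> by simp
    qed
  qed
  show ?case
  proof (rule exI[of _ e'], intro allI impI)
    fix as :: "'a list" assume L: "length as = Suc N"
    then obtain a as' where as: "as = a # as'" and L': "length as' = N" by (cases as) auto
    have "sy P as = (\<Sum>j<n. Dd j 1 a * (\<Sum>\<beta>\<in>mi n N. B \<beta> j * sy (DD \<beta>) as'))" using eq1[OF L'] as by simp
    also have "\<dots> = (\<Sum>j<n. Dd j 1 a * (\<Sum>\<beta>\<in>mi n N. e' (inc \<beta> j) * sy (DD \<beta>) as'))"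
      by (intro sum.cong refl arg_cong2[where f = times]) (simp_all add: SC)
    also have "\<dots> = (\<Sum>\<alpha>\<in>mi n (Suc N). e' \<alpha> * sy (DD \<alpha>) (a # as'))" by (rule EXP[OF L', symmetric])
    finally show "sy P as = (\<Sum>\<alpha>\<in>mi n (Suc N). e' \<alpha> * sy (DD \<alpha>) as)" using as by simp
  qed
qed

end


context HSset begin

lemma Ex: "diffop phi d P \<Longrightarrow> \<exists>a. (\<forall>\<alpha>. \<alpha> \<notin> multi_idx n d \<longrightarrow> a \<alpha> = 0)
   \<and> P = (\<lambda>x. \<Sum>\<alpha>\<in>multi_idx n d. a \<alpha> * DD \<alpha> x)"
proof (induction d arbitrary: P)
  case 0
  then obtain c where P: "P = (\<lambda>x. c * x)" by auto
  show ?case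
  proof (rule exI[of _ "\<lambda>\<alpha>. if \<alpha> = (\<lambda>_. 0) then c else 0"], intro conjI allI impI)
    fix \<alpha> :: "nat \<Rightarrow> nat" assume "\<alpha> \<notin> multi_idx n 0"
    then show "(if \<alpha> = (\<lambda>_. 0) then c else 0) = 0" by (auto simp: multi_idx_0)
  next
    show "P = (\<lambda>x. \<Sum>\<alpha>\<in>multi_idx n 0. (if \<alpha> = (\<lambda>_. 0) then c else 0) * DD \<alpha> x)"
      by (simp add: P multi_idx_0 DD_zero)
  qed
next
  case (Suc d)
  have kP: "klin phi P" and vP: "vanish (Suc (Suc d)) P" using Suc.prems DV by blast+
  obtain e where e: "\<And>as. length as = Suc d \<Longrightarrow> sy P as = (\<Sum>\<alpha>\<in>mi n (Suc d). e \<alpha> * sy (DD \<alpha>) as)"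
    using Eexist[OF kP vP] by blast
  define Q where "Q = (\<lambda>x. \<Sum>\<alpha>\<in>mi n (Suc d). e \<alpha> * DD \<alpha> x)"
  have kQ: "klin phi Q" unfolding Q_def
    by (rule klin_sum[OF finite_mi]) (intro klin_scal DD_klin)
  have vQ: "vanish (Suc (Suc d)) Q" unfolding Q_def
  proof (rule vanish_sum[OF finite_mi])
    fix \<alpha> assume "\<alpha> \<in> mi n (Suc d)"
    then have "(\<Sum>j<n. \<alpha> j) = Suc d" by (simp add: mi_def)
    then show "vanish (Suc (Suc d)) (\<lambda>x. e \<alpha> * DD \<alpha> x)" using DD_vanish[of \<alpha>] by (simp add: vanish_scal)
  qed
  define R where "R = (\<lambda>x. P x - Q x)"
  have kR: "klin phi R" unfolding R_def by (rule klin_diff[OF kP kQ])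
  have vR: "vanish (Suc (Suc d)) R" unfolding R_def by (rule vanish_diff[OF vP vQ])
  have sR: "\<forall>as. length as = Suc d \<longrightarrow> sy R as = 0"
  proof (intro allI impI)
    fix as :: "'a list" assume L: "length as = Suc d"
    show "sy R as = 0" unfolding R_def sy_diff Q_def sy_mix[OF finite_mi] e[OF L] by simp
  qed
  have "diffop phi d R" using DV kR vanish_lower[OF vR sR] by blast
  then obtain a' where a'0: "\<forall>\<alpha>. \<alpha> \<notin> multi_idx n d \<longrightarrow> a' \<alpha> = 0"
    and a'R: "R = (\<lambda>x. \<Sum>\<alpha>\<in>multi_idx n d. a' \<alpha> * DD \<alpha> x)" using Suc.IH by blast
  define a where "a \<alpha> = (if \<alpha> \<in> mi n (Suc d) then e \<alpha> else a' \<alpha>)" for \<alpha>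
  show ?case
  proof (rule exI[of _ a], intro conjI allI impI)
    fix \<alpha> assume "\<alpha> \<notin> multi_idx n (Suc d)"
    then show "a \<alpha> = 0" using a'0 by (simp add: a_def multi_idx_Suc)
  next
    show "P = (\<lambda>x. \<Sum>\<alpha>\<in>multi_idx n (Suc d). a \<alpha> * DD \<alpha> x)"
    proof (rule ext)
      fix x
      have "(\<Sum>\<alpha>\<in>multi_idx n (Suc d). a \<alpha> * DD \<alpha> x)
          = (\<Sum>\<alpha>\<in>multi_idx n d. a \<alpha> * DD \<alpha> x) + (\<Sum>\<alpha>\<in>mi n (Suc d). a \<alpha> * DD \<alpha> x)"
        unfolding multi_idx_Suc by (rule sum.union_disjoint[OF finite_multi_idx finite_mi multi_idx_disj])
      also have "(\<Sum>\<alpha>\<in>multi_idx n d. a \<alpha> * DD \<alpha> x) = R x"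
        unfolding a'R using multi_idx_disj[of n d] by (auto simp: a_def intro!: sum.cong)
      also have "(\<Sum>\<alpha>\<in>mi n (Suc d). a \<alpha> * DD \<alpha> x) = Q x"
        unfolding Q_def by (auto simp: a_def intro!: sum.cong)
      finally show "P x = (\<Sum>\<alpha>\<in>multi_idx n (Suc d). a \<alpha> * DD \<alpha> x)" by (simp add: R_def)
    qed
  qed
qed

lemma Un: "(\<forall>\<alpha>. \<alpha> \<notin> multi_idx n d \<longrightarrow> a \<alpha> = 0) \<Longrightarrow>
  (\<lambda>x. \<Sum>\<alpha>\<in>multi_idx n d. a \<alpha> * DD \<alpha> x) = (\<lambda>x. 0) \<Longrightarrow> a \<alpha> = 0"
proof (induction d arbitrary: a \<alpha>)
  case 0
  have "(\<Sum>\<alpha>\<in>multi_idx n 0. a \<alpha> * DD \<alpha> 1) = 0" using fun_cong[OF 0(2), of 1] by simp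
  then have "a (\<lambda>_. 0) = 0" by (simp add: multi_idx_0 DD_zero)
  then show ?case using 0(1) by (cases "\<alpha> = (\<lambda>_. 0)") (auto simp: multi_idx_0)
next
  case (Suc d)
  have top: "a \<beta> = 0" if b: "\<beta> \<in> mi n (Suc d)" for \<beta>
  proof (rule U[OF _ b])
    fix as :: "'a list" assume L: "length as = Suc d"
    have "0 = sy (\<lambda>x. \<Sum>\<alpha>\<in>multi_idx n (Suc d). a \<alpha> * DD \<alpha> x) as" using Suc.prems(2) by simp
    also have "\<dots> = (\<Sum>\<alpha>\<in>multi_idx n (Suc d). a \<alpha> * sy (DD \<alpha>) as)" by (rule sy_mix[OF finite_multi_idx])
    also have "\<dots> = (\<Sum>\<alpha>\<in>multi_idx n d. a \<alpha> * sy (DD \<alpha>) as) + (\<Sum>\<alpha>\<in>mi n (Suc d). a \<alpha> * sy (DD \<alpha>) as)"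
      unfolding multi_idx_Suc by (rule sum.union_disjoint[OF finite_multi_idx finite_mi multi_idx_disj])
    also have "(\<Sum>\<alpha>\<in>multi_idx n d. a \<alpha> * sy (DD \<alpha>) as) = 0"
    proof (rule sum.neutral, rule ballI)
      fix \<alpha> assume "\<alpha> \<in> multi_idx n d"
      then have "(\<Sum>j<n. \<alpha> j) < length as" using L by (simp add: multi_idx_def)
      then show "a \<alpha> * sy (DD \<alpha>) as = 0" by (simp add: DD_sy_high)
    qed
    finally show "(\<Sum>\<alpha>\<in>mi n (Suc d). a \<alpha> * sy (DD \<alpha>) as) = 0" by simp
  qed
  have a0: "\<forall>\<alpha>. \<alpha> \<notin> multi_idx n d \<longrightarrow> a \<alpha> = 0"
    using Suc.prems(1) top by (auto simp: multi_idx_Suc)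
  have "(\<lambda>x. \<Sum>\<alpha>\<in>multi_idx n d. a \<alpha> * DD \<alpha> x) = (\<lambda>x. 0)"
  proof (rule ext)
    fix x
    have "(\<Sum>\<alpha>\<in>multi_idx n (Suc d). a \<alpha> * DD \<alpha> x)
          = (\<Sum>\<alpha>\<in>multi_idx n d. a \<alpha> * DD \<alpha> x) + (\<Sum>\<alpha>\<in>mi n (Suc d). a \<alpha> * DD \<alpha> x)"
      unfolding multi_idx_Suc by (rule sum.union_disjoint[OF finite_multi_idx finite_mi multi_idx_disj])
    moreover have "(\<Sum>\<alpha>\<in>mi n (Suc d). a \<alpha> * DD \<alpha> x) = 0" using top by simp
    moreover have "(\<Sum>\<alpha>\<in>multi_idx n (Suc d). a \<alpha> * DD \<alpha> x) = 0" using fun_cong[OF Suc.prems(2), of x] by simp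
    ultimately show "(\<Sum>\<alpha>\<in>multi_idx n d. a \<alpha> * DD \<alpha> x) = 0" by simp
  qed
  then show ?case using Suc.IH a0 by blast
qed

end

theorem mainTheorem15:
  fixes phi :: "'k::comm_ring_1 \<Rightarrow> 'a::comm_ring_1"
    and Dd :: "nat \<Rightarrow> nat \<Rightarrow> 'a \<Rightarrow> 'a"
    and n d :: nat
    and P :: "'a \<Rightarrow> 'a"
  assumes alg: "ring_hom_fn phi"
    and ider: "Ider phi = Der phi"
    and hs: "\<forall>j<n. HS phi (Dd j)"
    and span: "\<forall>\<delta>\<in>Der phi. \<exists>b :: nat \<Rightarrow> 'a. \<delta> = (\<lambda>x. \<Sum>j<n. b j * Dd j 1 x)"
    and indep: "\<forall>b :: nat \<Rightarrow> 'a. (\<lambda>x. \<Sum>j<n. b j * Dd j 1 x) = (\<lambda>x. 0) \<longrightarrow> (\<forall>j<n. b j = 0)"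
    and P: "diffop phi d P"
  shows "\<exists>!a :: (nat \<Rightarrow> nat) \<Rightarrow> 'a. (\<forall>\<alpha>. \<alpha> \<notin> multi_idx n d \<longrightarrow> a \<alpha> = 0)
           \<and> P = (\<lambda>x. \<Sum>\<alpha>\<in>multi_idx n d. a \<alpha> * Dcomp Dd n \<alpha> x)"
proof -
  interpret H: HSset phi Dd n using hs span indep by unfold_locales
  obtain a where a: "(\<forall>\<alpha>. \<alpha> \<notin> multi_idx n d \<longrightarrow> a \<alpha> = 0) \<and> P = (\<lambda>x. \<Sum>\<alpha>\<in>multi_idx n d. a \<alpha> * Dcomp Dd n \<alpha> x)"
    using H.Ex[OF P] by blast
  show ?thesis
  proof (rule ex1I[of _ a])
    show "(\<forall>\<alpha>. \<alpha> \<notin> multi_idx n d \<longrightarrow> a \<alpha> = 0) \<and> P = (\<lambda>x. \<Sum>\<alpha>\<in>multi_idx n d. a \<alpha> * Dcomp Dd n \<alpha> x)"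
      by (rule a)
  next
    fix b assume b: "(\<forall>\<alpha>. \<alpha> \<notin> multi_idx n d \<longrightarrow> b \<alpha> = 0) \<and> P = (\<lambda>x. \<Sum>\<alpha>\<in>multi_idx n d. b \<alpha> * Dcomp Dd n \<alpha> x)"
    have z1: "\<forall>\<alpha>. \<alpha> \<notin> multi_idx n d \<longrightarrow> b \<alpha> - a \<alpha> = 0" using a b by simp
    have z2: "(\<lambda>x. \<Sum>\<alpha>\<in>multi_idx n d. (b \<alpha> - a \<alpha>) * Dcomp Dd n \<alpha> x) = (\<lambda>x. 0)"
    proof (rule ext)
      fix x
      have "(\<Sum>\<alpha>\<in>multi_idx n d. (b \<alpha> - a \<alpha>) * Dcomp Dd n \<alpha> x)
          = (\<Sum>\<alpha>\<in>multi_idx n d. b \<alpha> * Dcomp Dd n \<alpha> x) - (\<Sum>\<alpha>\<in>multi_idx n d. a \<alpha> * Dcomp Dd n \<alpha> x)"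
        by (simp add: left_diff_distrib sum_subtractf)
      also have "\<dots> = P x - P x" using fun_cong[OF conjunct2[OF a], of x] fun_cong[OF conjunct2[OF b], of x] by simp
      finally show "(\<Sum>\<alpha>\<in>multi_idx n d. (b \<alpha> - a \<alpha>) * Dcomp Dd n \<alpha> x) = 0" by simp
    qed
    have "b \<alpha> - a \<alpha> = 0" for \<alpha> by (rule H.Un[of d "\<lambda>\<alpha>. b \<alpha> - a \<alpha>", OF z1 z2])
    then show "b = a" by (simp add: fun_eq_iff)
  qed
qed


end
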